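(* Let $\rho>0$ and let $v$ be a bounded, $1$-periodic (i.e. $v(z+1)=v(z)$), non-constant analytic function on the strip $\{z\in\mathbb{C}:|\operatorname{Im} z|<\rho\}$. Then for every $0<\delta<\rho$ and every $k\in\mathbb{N}$ there exists $\epsilon>0$, depending only on $\delta$, $k$ and $v$, such that for every $k$-tuple $(E_1,\dots,E_k)\in\mathbb{R}^k$, $$\sup_{\delta/2\le y\le\delta}\ \min_{1\le j\le k}\ \inf_{x\in[0,1]}\big|v(x+iy)-E_j\big|>\epsilon .$$ *)

theory Defs
  imports "HOL-Analysis.Analysis"
begin

end

theory Submission imports Defs "HOL-Complex_Analysis.Complex_Analysis" begin

lemma convex_aux:
  fixes u v a b \<rho> :: real
  assumes "0 \<le> u" "0 \<le> v" "u + v = 1" "\<bar>a\<bar> < \<rho>" "\<bar>b\<bar> < \<rho>"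
  shows "\<bar>u * a + v * b\<bar> < \<rho>"
proof -
  have "\<bar>u * a + v * b\<bar> \<le> u * \<bar>a\<bar> + v * \<bar>b\<bar>"
    using assms by (simp add: abs_triangle_ineq[THEN order_trans] abs_mult)
  also have "\<dots> < \<rho>"
  proof -
    have "u * \<bar>a\<bar> \<le> u * \<rho>" "v * \<bar>b\<bar> \<le> v * \<rho>" using assms by (auto intro: mult_left_mono)
    moreover have "u * \<bar>a\<bar> < u * \<rho> \<or> v * \<bar>b\<bar> < v * \<rho>" using assms
      by (cases "u = 0") auto
    moreover have "u * \<rho> + v * \<rho> = \<rho>" using assms by (metis distrib_right mult_1)
    ultimately show ?thesis by linarith
  qed
  finally show ?thesis .
qed

lemma strip_convex: "convex {z::complex. \<bar>Im z\<bar> < \<rho>}"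
  unfolding convex_def by (auto intro: convex_aux)

lemma strip_open: "open {z::complex. \<bar>Im z\<bar> < \<rho>}"
  by (intro open_Collect_less continuous_intros)

lemma rect_compact: "compact ((\<lambda>p. Complex (fst p) (snd p)) ` ({0..1} \<times> {a..b}))"
  by (intro compact_continuous_image compact_Times compact_Icc continuous_intros)

lemma zeros_finite:
  fixes v :: "complex \<Rightarrow> complex"
  assumes holo: "v holomorphic_on {z. \<bar>Im z\<bar> < \<rho>}"
    and nonconst: "\<exists>z\<in>{z. \<bar>Im z\<bar> < \<rho>}. \<exists>w\<in>{z. \<bar>Im z\<bar> < \<rho>}. v z \<noteq> v w"
    and ab: "-\<rho> < a" "b < \<rho>"
  shows "finite {z \<in> (\<lambda>p. Complex (fst p) (snd p)) ` ({0..1} \<times> {a..b}). v z = e}"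
proof (rule ccontr)
  let ?R = "(\<lambda>p. Complex (fst p) (snd p)) ` ({0..1} \<times> {a..b})"
  let ?S = "{z::complex. \<bar>Im z\<bar> < \<rho>}"
  assume inf: "infinite {z \<in> ?R. v z = e}"
  have RS: "?R \<subseteq> ?S" using ab by auto
  obtain \<xi> where \<xi>: "\<xi> \<in> ?R" "\<xi> islimpt {z \<in> ?R. v z = e}"
    using Heine_Borel_imp_Bolzano_Weierstrass[OF rect_compact inf] by blast
  have "\<And>w. w \<in> ?S \<Longrightarrow> v w - e = 0"
    apply (rule analytic_continuation[where f="\<lambda>z. v z - e" and S="?S" and U="{z \<in> ?R. v z = e}" and \<xi>=\<xi>])
    using holo strip_open strip_convex convex_connected RS \<xi> ab
    by (auto intro!: holomorphic_intros)
  with nonconst show False by auto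
qed

definition Fd :: "(complex \<Rightarrow> complex) \<Rightarrow> real \<Rightarrow> real \<Rightarrow> real" where
  "Fd v y e = Inf ((\<lambda>x. cmod (v (Complex x y) - complex_of_real e)) ` {0..1})"

lemma Fd_lower:
  assumes "\<And>x. x \<in> {0..1} \<Longrightarrow> c \<le> cmod (v (Complex x y) - complex_of_real e)"
  shows "c \<le> Fd v y e"
  unfolding Fd_def using assms by (intro cInf_greatest) auto

lemma Fd_le: "x \<in> {0..1} \<Longrightarrow> Fd v y e \<le> cmod (v (Complex x y) - complex_of_real e)"
  unfolding Fd_def by (rule cInf_lower) (auto intro: bdd_belowI[where m=0])

lemma Fd_lip: "Fd v y e - \<bar>E0 - e\<bar> \<le> Fd v y E0"
proof (rule Fd_lower)
  fix x :: real assume x: "x \<in> {0..1}"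
  have "cmod (v (Complex x y) - of_real e) \<le> cmod (v (Complex x y) - of_real E0) + cmod (of_real E0 - of_real e :: complex)"
    using norm_triangle_ineq[of "v (Complex x y) - of_real E0" "of_real E0 - of_real e"] by simp
  also have "cmod (of_real E0 - of_real e :: complex) = \<bar>E0 - e\<bar>"
    by (metis norm_of_real of_real_diff)
  finally show "Fd v y e - \<bar>E0 - e\<bar> \<le> cmod (v (Complex x y) - complex_of_real E0)"
    using Fd_le[OF x, of v y e] by linarith
qed

lemma Fd_big:
  assumes "\<And>x. x \<in> {0..1} \<Longrightarrow> cmod (v (Complex x y)) \<le> B"
  shows "\<bar>e\<bar> - B \<le> Fd v y e"
proof (rule Fd_lower)
  fix x :: real assume x: "x \<in> {0..1}"
  have "cmod (of_real e :: complex) - cmod (v (Complex x y)) \<le> cmod (v (Complex x y) - of_real e)"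
    by (metis norm_minus_commute norm_triangle_ineq2)
  then show "\<bar>e\<bar> - B \<le> cmod (v (Complex x y) - complex_of_real e)"
    using assms[OF x] by simp
qed

lemma pos_sub:
  fixes v :: "complex \<Rightarrow> complex"
  assumes holo: "v holomorphic_on {z. \<bar>Im z\<bar> < \<rho>}"
    and nonconst: "\<exists>z\<in>{z. \<bar>Im z\<bar> < \<rho>}. \<exists>w\<in>{z. \<bar>Im z\<bar> < \<rho>}. v z \<noteq> v w"
    and ab: "-\<rho> < a" "a < b" "b < \<rho>"
  shows "\<exists>a' b' c. a \<le> a' \<and> a' < b' \<and> b' \<le> b \<and> c > 0 \<and> (\<forall>y\<in>{a'..b'}. c \<le> Fd v y e)"
proof -
  let ?Z = "{z \<in> (\<lambda>p. Complex (fst p) (snd p)) ` ({0..1} \<times> {a..b}). v z = e}"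
  have fZ: "finite ?Z" using zeros_finite[OF holo nonconst ab(1) ab(3)] .
  define T where "T = {s \<in> Im ` ?Z. a < s \<and> s < b}"
  have fT: "finite T" unfolding T_def using fZ by auto
  define t where "t = Min (insert b T)"
  have ta: "a < t" unfolding t_def using fT ab(2) by (auto simp: T_def)
  have tb: "t \<le> b" unfolding t_def using fT by auto
  have tT: "\<And>s. s \<in> T \<Longrightarrow> t \<le> s" unfolding t_def using fT by auto
  define a' where "a' = a + (t - a) / 3"
  define b' where "b' = a + 2 * (t - a) / 3"
  have b't: "b' < t" unfolding b'_def using ta by (simp add: field_simps)
  have aa': "a < a'" unfolding a'_def using ta by (simp add: field_simps)
  have a'b': "a' < b'" unfolding a'_def b'_def using ta by (simp add: field_simps)
  have noZ: "Im z \<notin> {a'..b'}" if "z \<in> ?Z" for z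
  proof
    assume m: "Im z \<in> {a'..b'}"
    have "Im z \<in> Im ` ?Z" using that by blast
    moreover have "Im z \<le> b" using that by auto
    ultimately have "Im z \<in> T \<or> Im z = b \<or> Im z \<le> a" unfolding T_def by auto
    moreover have "Im z \<le> b'" "a' \<le> Im z" using m by simp_all
    ultimately show False using tT[of "Im z"] tb b't aa' by force
  qed
  let ?R = "(\<lambda>p. Complex (fst p) (snd p)) ` ({0..1} \<times> {a'..b'})"
  have RS: "?R \<subseteq> {z. \<bar>Im z\<bar> < \<rho>}" using ab ta tb b't aa' by auto
  have cont: "continuous_on ?R (\<lambda>z. cmod (v z - of_real e))"
    by (intro continuous_intros continuous_on_subset[OF holomorphic_on_imp_continuous_on[OF holo] RS])
  have ne: "?R \<noteq> {}" using a'b' by auto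
  obtain z0 where z0: "z0 \<in> ?R" "\<And>z. z \<in> ?R \<Longrightarrow> cmod (v z0 - of_real e) \<le> cmod (v z - of_real e)"
    using continuous_attains_inf[OF rect_compact ne cont] by blast
  have "v z0 \<noteq> of_real e"
  proof
    assume "v z0 = of_real e"
    moreover have "z0 \<in> (\<lambda>p. Complex (fst p) (snd p)) ` ({0..1} \<times> {a..b})"
      using z0(1) ta tb aa' b't by auto
    ultimately have "z0 \<in> ?Z" by simp
    with noZ have "Im z0 \<notin> {a'..b'}" by blast
    with z0(1) show False by auto
  qed
  then have cpos: "cmod (v z0 - of_real e) > 0" by simp
  have "\<forall>y\<in>{a'..b'}. cmod (v z0 - of_real e) \<le> Fd v y e"
  proof
    fix y assume y: "y \<in> {a'..b'}"
    show "cmod (v z0 - of_real e) \<le> Fd v y e"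
    proof (rule Fd_lower)
      fix x :: real assume "x \<in> {0..1}"
      then have "Complex x y \<in> ?R" using y by (auto intro!: image_eqI[where x="(x,y)"])
      then show "cmod (v z0 - of_real e) \<le> cmod (v (Complex x y) - complex_of_real e)" by (rule z0(2))
    qed
  qed
  moreover have "a \<le> a'" "a' < b'" "b' \<le> b" using tb aa' b't a'b' by auto
  ultimately show ?thesis using cpos by blast
qed

lemma main_ind:
  fixes v :: "complex \<Rightarrow> complex"
  assumes holo: "v holomorphic_on {z. \<bar>Im z\<bar> < \<rho>}"
    and nonconst: "\<exists>z\<in>{z. \<bar>Im z\<bar> < \<rho>}. \<exists>w\<in>{z. \<bar>Im z\<bar> < \<rho>}. v z \<noteq> v w"
    and B: "\<And>z. \<bar>Im z\<bar> < \<rho> \<Longrightarrow> cmod (v z) \<le> B"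
    and lohi: "-\<rho> < lo" "hi < \<rho>"
  shows "\<forall>a b. lo \<le> a \<longrightarrow> a < b \<longrightarrow> b \<le> hi \<longrightarrow>
           (\<exists>\<epsilon>>0. \<forall>E::nat\<Rightarrow>real. \<exists>y\<in>{a..b}. \<forall>j\<in>{1..k}. \<epsilon> < Fd v y (E j))"
proof (induction k)
  case 0
  show ?case
  proof (intro allI impI)
    fix a b :: real assume "lo \<le> a" "a < b" "b \<le> hi"
    then show "\<exists>\<epsilon>>0. \<forall>E::nat\<Rightarrow>real. \<exists>y\<in>{a..b}. \<forall>j\<in>{1..0}. \<epsilon> < Fd v y (E j)"
      by (intro exI[of _ 1]) (auto intro!: bexI[of _ a])
  qed
next
  case (Suc k)
  show ?case
  proof (intro allI impI)
    fix a b :: real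
    assume ab: "lo \<le> a" "a < b" "b \<le> hi"
    have key: "\<forall>e. \<exists>r>0. \<exists>\<eta>>0. \<forall>E0. \<bar>E0 - e\<bar> < r \<longrightarrow>
        (\<forall>E::nat\<Rightarrow>real. \<exists>y\<in>{a..b}. (\<forall>j\<in>{1..k}. \<eta> < Fd v y (E j)) \<and> \<eta> < Fd v y E0)"
    proof
      fix e
      obtain a' b' c where abc: "a \<le> a'" "a' < b'" "b' \<le> b" "c > 0" "\<forall>y\<in>{a'..b'}. c \<le> Fd v y e"
        using pos_sub[OF holo nonconst, of a b e] ab lohi by auto
      obtain \<epsilon>' where \<epsilon>': "\<epsilon>' > 0" "\<And>E::nat\<Rightarrow>real. \<exists>y\<in>{a'..b'}. \<forall>j\<in>{1..k}. \<epsilon>' < Fd v y (E j)"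
        using Suc.IH abc ab by (meson order_trans)
      show "\<exists>r>0. \<exists>\<eta>>0. \<forall>E0. \<bar>E0 - e\<bar> < r \<longrightarrow>
        (\<forall>E::nat\<Rightarrow>real. \<exists>y\<in>{a..b}. (\<forall>j\<in>{1..k}. \<eta> < Fd v y (E j)) \<and> \<eta> < Fd v y E0)"
      proof -
        have "\<forall>E0. \<bar>E0 - e\<bar> < c/2 \<longrightarrow>
          (\<forall>E::nat\<Rightarrow>real. \<exists>y\<in>{a..b}. (\<forall>j\<in>{1..k}. min (c/2) \<epsilon>' < Fd v y (E j)) \<and> min (c/2) \<epsilon>' < Fd v y E0)"
        proof (intro allI impI)
          fix E0 :: real and E :: "nat \<Rightarrow> real"
          assume E0: "\<bar>E0 - e\<bar> < c/2"
          obtain y where y: "y \<in> {a'..b'}" "\<forall>j\<in>{1..k}. \<epsilon>' < Fd v y (E j)" using \<epsilon>'(2) by blast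
          have "c \<le> Fd v y e" using abc(5) y(1) by blast
          then have "c/2 < Fd v y E0" using Fd_lip[of v y e E0] E0 by linarith
          moreover have "y \<in> {a..b}" using y(1) abc by auto
          ultimately show "\<exists>y\<in>{a..b}. (\<forall>j\<in>{1..k}. min (c/2) \<epsilon>' < Fd v y (E j)) \<and> min (c/2) \<epsilon>' < Fd v y E0"
            using y(2) by force
        qed
        moreover have "c/2 > 0" "min (c/2) \<epsilon>' > 0" using abc \<epsilon>' by auto
        ultimately show ?thesis by blast
      qed
    qed
    then obtain r where r: "\<forall>e. r e > 0 \<and> (\<exists>\<eta>>0. \<forall>E0. \<bar>E0 - e\<bar> < r e \<longrightarrow>
        (\<forall>E::nat\<Rightarrow>real. \<exists>y\<in>{a..b}. (\<forall>j\<in>{1..k}. \<eta> < Fd v y (E j)) \<and> \<eta> < Fd v y E0))"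
      by metis
    then obtain \<eta> where \<eta>: "\<forall>e. \<eta> e > 0 \<and> (\<forall>E0. \<bar>E0 - e\<bar> < r e \<longrightarrow>
        (\<forall>E::nat\<Rightarrow>real. \<exists>y\<in>{a..b}. (\<forall>j\<in>{1..k}. \<eta> e < Fd v y (E j)) \<and> \<eta> e < Fd v y E0))"
      by metis
    obtain D where D: "D \<subseteq> {-B-1..B+1}" "finite D" "{-B-1..B+1} \<subseteq> (\<Union>e\<in>D. ball e (r e))"
    proof (rule compactE_image[OF compact_Icc, of "{-B-1..B+1}" "\<lambda>e. ball e (r e)"])
      show "{-B-1..B+1} \<subseteq> (\<Union>e\<in>{-B-1..B+1}. ball e (r e))" using r by force
    qed auto
    obtain \<epsilon>0 where \<epsilon>0: "\<epsilon>0 > 0" "\<And>E::nat\<Rightarrow>real. \<exists>y\<in>{a..b}. \<forall>j\<in>{1..k}. \<epsilon>0 < Fd v y (E j)"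
      using Suc.IH ab by blast
    define \<epsilon> where "\<epsilon> = Min (insert (1/2) (insert \<epsilon>0 (\<eta> ` D)))"
    have fin: "finite (insert (1/2) (insert \<epsilon>0 (\<eta> ` D)))" using D(2) by simp
    have \<epsilon>pos: "\<epsilon> > 0" unfolding \<epsilon>_def using fin \<epsilon>0 \<eta> by (auto simp: Min_gr_iff)
    have \<epsilon>le: "\<epsilon> \<le> 1/2" "\<epsilon> \<le> \<epsilon>0" "\<And>e. e \<in> D \<Longrightarrow> \<epsilon> \<le> \<eta> e"
      unfolding \<epsilon>_def by (rule Min_le[OF fin]; simp)+
    show "\<exists>\<epsilon>>0. \<forall>E::nat\<Rightarrow>real. \<exists>y\<in>{a..b}. \<forall>j\<in>{1..Suc k}. \<epsilon> < Fd v y (E j)"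
    proof (intro exI[of _ \<epsilon>] conjI allI \<epsilon>pos)
      fix E :: "nat \<Rightarrow> real"
      have split: "\<And>j. j \<in> {1..Suc k} \<Longrightarrow> j = Suc k \<or> j \<in> {1..k}" by auto
      show "\<exists>y\<in>{a..b}. \<forall>j\<in>{1..Suc k}. \<epsilon> < Fd v y (E j)"
      proof (cases "E (Suc k) \<in> {-B-1..B+1}")
        case True
        then obtain e where e: "e \<in> D" "E (Suc k) \<in> ball e (r e)" using D(3) by blast
        then have "\<bar>E (Suc k) - e\<bar> < r e" by (simp add: dist_real_def abs_minus_commute)
        then obtain y where y: "y \<in> {a..b}" "\<forall>j\<in>{1..k}. \<eta> e < Fd v y (E j)" "\<eta> e < Fd v y (E (Suc k))"
          using \<eta> by blast
        show ?thesis using y \<epsilon>le(3)[OF e(1)] split by (intro bexI[OF _ y(1)]) force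
      next
        case False
        obtain y where y: "y \<in> {a..b}" "\<forall>j\<in>{1..k}. \<epsilon>0 < Fd v y (E j)" using \<epsilon>0(2) by blast
        have "\<bar>E (Suc k)\<bar> - B \<le> Fd v y (E (Suc k))"
        proof (rule Fd_big)
          fix x :: real assume "x \<in> {0..1}"
          show "cmod (v (Complex x y)) \<le> B" using B y(1) ab lohi by auto
        qed
        moreover have "\<bar>E (Suc k)\<bar> > B + 1" using False by auto
        ultimately have "\<epsilon> < Fd v y (E (Suc k))" using \<epsilon>le(1) by linarith
        then show ?thesis using y \<epsilon>le(2) split by (intro bexI[OF _ y(1)]) force
      qed
    qed
  qed
qed

theorem mainTheorem2:
  fixes v :: "complex \<Rightarrow> complex" and \<rho> :: real
  assumes rho_pos: "\<rho> > 0"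
    and holo: "v holomorphic_on {z. \<bar>Im z\<bar> < \<rho>}"
    and bdd: "bounded (v ` {z. \<bar>Im z\<bar> < \<rho>})"
    and periodic: "\<And>z. \<bar>Im z\<bar> < \<rho> \<Longrightarrow> v (z + 1) = v z"
    and nonconst: "\<exists>z\<in>{z. \<bar>Im z\<bar> < \<rho>}. \<exists>w\<in>{z. \<bar>Im z\<bar> < \<rho>}. v z \<noteq> v w"
  shows "\<forall>\<delta> (k::nat). 0 < \<delta> \<and> \<delta> < \<rho> \<and> k \<ge> 1 \<longrightarrow>
           (\<exists>\<epsilon>>0. \<forall>E :: nat \<Rightarrow> real.
              Sup ((\<lambda>y. Min ((\<lambda>j. Inf ((\<lambda>x. cmod (v (Complex x y) - complex_of_real (E j))) ` {0..1}))
                                 ` {1..k}))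
                   ` {\<delta>/2..\<delta>}) > \<epsilon>)"
proof (intro allI impI)
  fix \<delta> :: real and k :: nat
  assume dk: "0 < \<delta> \<and> \<delta> < \<rho> \<and> k \<ge> 1"
  obtain B where B: "\<And>z. \<bar>Im z\<bar> < \<rho> \<Longrightarrow> cmod (v z) \<le> B"
    using bdd unfolding bounded_iff by auto
  obtain \<epsilon> where \<epsilon>: "\<epsilon> > 0" "\<And>E::nat\<Rightarrow>real. \<exists>y\<in>{\<delta>/2..\<delta>}. \<forall>j\<in>{1..k}. \<epsilon> < Fd v y (E j)"
  proof -
    have "\<delta>/2 < \<delta>" "- \<rho> < \<delta>/2" using dk by auto
    from main_ind[OF holo nonconst B this(2), of \<delta> k, rule_format, of "\<delta>/2" \<delta>] this dk
    show thesis using that by auto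
  qed
  have "\<forall>E :: nat \<Rightarrow> real. \<epsilon> < Sup ((\<lambda>y. Min ((\<lambda>j. Fd v y (E j)) ` {1..k})) ` {\<delta>/2..\<delta>})"
  proof
    fix E :: "nat \<Rightarrow> real"
    obtain y where y: "y \<in> {\<delta>/2..\<delta>}" "\<forall>j\<in>{1..k}. \<epsilon> < Fd v y (E j)" using \<epsilon>(2) by blast
    have k1: "1 \<in> {1..k}" using dk by auto
    have "\<epsilon> < Min ((\<lambda>j. Fd v y (E j)) ` {1..k})" using y(2) k1 by (subst Min_gr_iff) auto
    also have "\<dots> \<le> Sup ((\<lambda>y. Min ((\<lambda>j. Fd v y (E j)) ` {1..k})) ` {\<delta>/2..\<delta>})"
    proof (rule cSup_upper)
      show "Min ((\<lambda>j. Fd v y (E j)) ` {1..k}) \<in> (\<lambda>y. Min ((\<lambda>j. Fd v y (E j)) ` {1..k})) ` {\<delta>/2..\<delta>}"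
        using y(1) by blast
      show "bdd_above ((\<lambda>y. Min ((\<lambda>j. Fd v y (E j)) ` {1..k})) ` {\<delta>/2..\<delta>})"
      proof (rule bdd_aboveI2)
        fix y' assume y': "y' \<in> {\<delta>/2..\<delta>}"
        have "Min ((\<lambda>j. Fd v y' (E j)) ` {1..k}) \<le> Fd v y' (E 1)" using k1 by (intro Min_le) auto
        also have "\<dots> \<le> cmod (v (Complex 0 y') - complex_of_real (E 1))" by (rule Fd_le) auto
        also have "\<dots> \<le> cmod (v (Complex 0 y')) + cmod (complex_of_real (E 1))" by (rule norm_triangle_ineq4)
        also have "\<dots> \<le> B + \<bar>E 1\<bar>" using B[of "Complex 0 y'"] y' dk by auto
        finally show "Min ((\<lambda>j. Fd v y' (E j)) ` {1..k}) \<le> B + \<bar>E 1\<bar>" .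
      qed
    qed
    finally show "\<epsilon> < Sup ((\<lambda>y. Min ((\<lambda>j. Fd v y (E j)) ` {1..k})) ` {\<delta>/2..\<delta>})" .
  qed
  then show "\<exists>\<epsilon>>0. \<forall>E :: nat \<Rightarrow> real.
              Sup ((\<lambda>y. Min ((\<lambda>j. Inf ((\<lambda>x. cmod (v (Complex x y) - complex_of_real (E j))) ` {0..1}))
                                 ` {1..k}))
                   ` {\<delta>/2..\<delta>}) > \<epsilon>"
    using \<epsilon>(1) unfolding Fd_def by blast
qed

end
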